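(* Let $V=\mathbb{R}^r$, let $\mathcal{A}$ be a simplicial arrangement in $V$, let $K=\langle\alpha^\vee_1,\ldots,\alpha^\vee_r\rangle_{>0}$ be a chamber (with $\alpha^\vee_1,\ldots,\alpha^\vee_r$ a basis of $V$), and let $\tilde K$ be the chamber with $\overline{K}\cap\overline{\tilde K}=\langle\alpha^\vee_2,\ldots,\alpha^\vee_r\rangle_{\ge 0}$. Let $\beta^\vee\in V$ be the unique vector such that $\tilde K=\langle\beta^\vee,\alpha^\vee_2,\ldots,\alpha^\vee_r\rangle_{>0}$ and $|B\cap(-\tilde B)|=1$, where $B=\{\alpha_1,\ldots,\alpha_r\}$ is the dual basis of $\{\alpha^\vee_1,\ldots,\alpha^\vee_r\}$ and $\tilde B=\{\beta_1,\ldots,\beta_r\}$ is the dual basis of $\{\beta^\vee,\alpha^\vee_2,\ldots,\alpha^\vee_r\}$ (indexed so that $\beta_1$ is dual to $\beta^\vee$ and $\beta_j$ to $\alpha_j^\vee$ for $j>1$). Write $\beta^\vee=\sum_{i=1}^r\mu_i\alpha^\vee_i$ with $\mu_i\in\mathbb{R}$. Then the linear map $\sigma:V^*\to V^*$, $\alpha_i\mapsto\beta_i$ ($i=1,\ldots,r$), is a reflection, and its matrix with respect to $B$ (the $j$-th column being the coordinate vector of $\sigma(\alpha_j)$) is \[\begin{pmatrix}-1&\mu_2&\cdots&\mu_r\\0&1&&0\\\vdots&&\ddots&\\0&0&&1\end{pmatrix}.\]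
   Context: A hyperplane arrangement in $V$ is a finite set of linear hyperplanes; its chambers are the connected components of the complement of their union. It is simplicial if every chamber equals $\langle v_1,\ldots,v_r\rangle_{>0}=\{\sum a_iv_i\mid a_i>0\}$ for some basis $v_1,\ldots,v_r$ of $V$; $\langle\cdots\rangle_{\ge0}$ denotes the closed cone of nonnegative combinations. A reflection on a vector space $W$ is an element $\sigma\in\mathrm{GL}(W)$, $\sigma\ne\mathrm{id}$, of finite order which fixes some hyperplane of $W$ pointwise. *)

theory Defs
  imports "HOL-Analysis.Analysis"
begin

text \<open>Here V = real^'n (r = CARD('n)); dual space V* identified with real^'n via the inner product.\<close>

definition lin_hyperplane :: "('a::euclidean_space) set \<Rightarrow> bool" where
  "lin_hyperplane H \<longleftrightarrow> (\<exists>a. a \<noteq> 0 \<and> H = {x. a \<bullet> x = 0})"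

definition hyperplane_arrangement :: "('a::euclidean_space) set set \<Rightarrow> bool" where
  "hyperplane_arrangement A \<longleftrightarrow> finite A \<and> (\<forall>H\<in>A. lin_hyperplane H)"

definition chambers :: "('a::euclidean_space) set set \<Rightarrow> 'a set set" where
  "chambers A = components (UNIV - \<Union>A)"

definition pos_cone :: "('i \<Rightarrow> 'a::real_vector) \<Rightarrow> 'i set \<Rightarrow> 'a set" where
  "pos_cone v I = {(\<Sum>i\<in>I. c i *\<^sub>R v i) | c. \<forall>i\<in>I. c i > 0}"

definition nonneg_cone :: "('i \<Rightarrow> 'a::real_vector) \<Rightarrow> 'i set \<Rightarrow> 'a set" where
  "nonneg_cone v I = {(\<Sum>i\<in>I. c i *\<^sub>R v i) | c. \<forall>i\<in>I. c i \<ge> 0}"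

definition is_basis :: "('n::finite \<Rightarrow> 'a::euclidean_space) \<Rightarrow> bool" where
  "is_basis v \<longleftrightarrow> inj v \<and> independent (range v) \<and> span (range v) = UNIV"

definition simplicial :: "(real^'n::finite) set set \<Rightarrow> bool" where
  "simplicial A \<longleftrightarrow> hyperplane_arrangement A \<and>
     (\<forall>C\<in>chambers A. \<exists>v::'n \<Rightarrow> real^'n. is_basis v \<and> C = pos_cone v UNIV)"

definition is_reflection :: "('a::euclidean_space \<Rightarrow> 'a) \<Rightarrow> bool" where
  "is_reflection s \<longleftrightarrow> linear s \<and> bij s \<and> s \<noteq> id \<and> (\<exists>m>0. (s ^^ m) = id) \<and>
     (\<exists>H. lin_hyperplane H \<and> (\<forall>x\<in>H. s x = x))"

end

theory Submission
  imports Defs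
begin

lemma eq_by_av:
  fixes av :: "'n::finite \<Rightarrow> real^'n"
  assumes "is_basis av" and "\<And>j. u \<bullet> av j = v \<bullet> av j"
  shows "u = v"
proof -
  have sp: "span (range av) = UNIV" using assms(1) by (simp add: is_basis_def)
  have "orthogonal (u - v) y" if "y \<in> range av" for y
    using that assms(2) by (auto simp: orthogonal_def inner_diff_left)
  hence "orthogonal (u - v) (u - v)"
    using orthogonal_to_span[of "u - v" "range av" "u - v"] sp by auto
  thus ?thesis by (simp add: orthogonal_def)
qed

theorem corollary2p6:
  fixes A :: "(real^'n) set set"
    and av alpha beta :: "'n \<Rightarrow> real^'n"
    and bv :: "real^'n"
    and k :: 'n
    and K Kt :: "(real^'n) set"
    and mu :: "'n \<Rightarrow> real"
    and sigma :: "real^'n \<Rightarrow> real^'n"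
  assumes simp: "simplicial A"
    and av_basis: "is_basis av"
    and K_ch: "K \<in> chambers A"
    and K_def: "K = pos_cone av UNIV"
    and Kt_ch: "Kt \<in> chambers A"
    and Kt_wall: "closure K \<inter> closure Kt = nonneg_cone av (UNIV - {k})"
    and Kt_def: "Kt = pos_cone (av(k := bv)) UNIV"
    and alpha_dual: "\<And>i j. alpha i \<bullet> av j = (if i = j then 1 else 0)"
    and beta_dual: "\<And>i j. beta i \<bullet> (av(k := bv)) j = (if i = j then 1 else 0)"
    and card_one: "card (range alpha \<inter> uminus ` range beta) = 1"
    and mu_def: "bv = (\<Sum>i\<in>UNIV. mu i *\<^sub>R av i)"
    and sigma_lin: "linear sigma"
    and sigma_def: "\<And>i. sigma (alpha i) = beta i"
  shows "is_reflection sigma \<and>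
    (\<forall>j. sigma (alpha j) = (\<Sum>i\<in>UNIV.
        (if i = k then (if j = k then -1 else mu j) else (if i = j then 1 else 0)) *\<^sub>R alpha i))"
proof -
  have d_other: "beta i \<bullet> av l = (if i = l then 1 else 0)" if "l \<noteq> k" for i l
    using beta_dual[of i l] that by simp
  have bvd: "beta i \<bullet> bv = (if i = k then 1 else 0)" for i
    using beta_dual[of i k] by simp
  have split: "beta i \<bullet> bv = mu k * (beta i \<bullet> av k) + (if i \<noteq> k then mu i else 0)" for i
  proof -
    have "beta i \<bullet> bv = (\<Sum>l\<in>UNIV. mu l * (beta i \<bullet> av l))"
      by (simp add: mu_def inner_sum_right)
    also have "\<dots> = mu k * (beta i \<bullet> av k) + (\<Sum>l\<in>UNIV - {k}. mu l * (beta i \<bullet> av l))"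
      by (simp add: sum.remove[of UNIV k])
    also have "(\<Sum>l\<in>UNIV - {k}. mu l * (beta i \<bullet> av l))
        = (\<Sum>l\<in>UNIV - {k}. (if l = i then mu i else 0))"
      by (rule sum.cong) (auto simp: d_other)
    also have "\<dots> = (if i \<noteq> k then mu i else 0)"
      by (simp add: sum.delta')
    finally show ?thesis .
  qed
  have kk: "mu k * (beta k \<bullet> av k) = 1" using split[of k] bvd[of k] by simp
  have ik: "mu i + mu k * (beta i \<bullet> av k) = 0" if "i \<noteq> k" for i
    using split[of i] bvd[of i] that by simp
  have "range alpha \<inter> uminus ` range beta \<noteq> {}" using card_one by force
  then obtain i j where ij: "alpha i = - beta j" by auto
  have muk: "mu k = -1"
  proof (cases "j = k")
    case False
    have "alpha i \<bullet> av j = - (beta j \<bullet> av j)" by (simp add: ij)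
    also have "\<dots> = -1" using d_other[OF False, of j] by simp
    finally show ?thesis using alpha_dual[of i j] by (simp split: if_splits)
  next
    case True
    have e: "alpha i \<bullet> av k = - (beta k \<bullet> av k)" by (simp add: ij True)
    show ?thesis
    proof (cases "i = k")
      case True
      then have "beta k \<bullet> av k = -1" using e alpha_dual[of k k] by simp
      then show ?thesis using kk by simp
    next
      case False
      then have "beta k \<bullet> av k = 0" using e alpha_dual[of i k] by simp
      then show ?thesis using kk by simp
    qed
  qed
  have dk: "beta i \<bullet> av k = (if i = k then -1 else mu i)" for i
    using kk ik[of i] muk by (cases "i = k") auto
  define M where "M = (\<lambda>j i. (if i = k then (if j = k then -1 else mu j) else (if i = j then 1 else (0::real))))"
  have inner_comb: "(\<Sum>i\<in>UNIV. c i *\<^sub>R alpha i) \<bullet> av l = c l" for c l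
    by (simp add: inner_sum_left alpha_dual if_distrib cong: if_cong)
  have beta_eq: "beta j = (\<Sum>i\<in>UNIV. M j i *\<^sub>R alpha i)" for j
  proof (rule eq_by_av[OF av_basis])
    fix l
    show "beta j \<bullet> av l = (\<Sum>i\<in>UNIV. M j i *\<^sub>R alpha i) \<bullet> av l"
      unfolding inner_comb M_def
      by (cases "l = k") (auto simp: dk d_other)
  qed
  have part2: "\<forall>j. sigma (alpha j) = (\<Sum>i\<in>UNIV.
        (if i = k then (if j = k then -1 else mu j) else (if i = j then 1 else 0)) *\<^sub>R alpha i)"
    using beta_eq sigma_def by (simp add: M_def)
  define w where "w = bv - av k"
  define f where "f = (\<lambda>v. v + (w \<bullet> v) *\<^sub>R alpha k)"
  have wa: "w \<bullet> alpha k = -2"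
  proof -
    have "alpha k \<bullet> bv = mu k"
      by (simp add: mu_def inner_sum_right alpha_dual if_distrib cong: if_cong)
    then show ?thesis using muk alpha_dual[of k k]
      by (simp add: w_def inner_diff_left inner_diff_right inner_commute)
  qed
  have f_lin: "linear f"
    unfolding f_def by (rule linearI) (auto simp: inner_add_right algebra_simps)
  have f_alpha: "f (alpha j) = beta j" for j
  proof (rule sym, rule eq_by_av[OF av_basis])
    fix l
    have wj: "w \<bullet> alpha j = (if j = k then -2 else mu j)"
    proof -
      have "alpha j \<bullet> bv = mu j"
        by (simp add: mu_def inner_sum_right alpha_dual if_distrib cong: if_cong)
      then show ?thesis using muk alpha_dual[of j k]
        by (auto simp: w_def inner_diff_left inner_diff_right inner_commute)
    qed
    show "beta j \<bullet> av l = f (alpha j) \<bullet> av l"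
      unfolding f_def using wj
      by (cases "l = k") (auto simp: dk d_other inner_add_left alpha_dual)
  qed
  have expand: "v = (\<Sum>j\<in>UNIV. (v \<bullet> av j) *\<^sub>R alpha j)" for v
    by (rule eq_by_av[OF av_basis]) (simp add: inner_comb)
  have sf: "sigma v = f v" for v
  proof -
    have "sigma v = (\<Sum>j\<in>UNIV. (v \<bullet> av j) *\<^sub>R sigma (alpha j))"
      by (subst expand[of v]) (simp add: linear_sum[OF sigma_lin] linear_scale[OF sigma_lin])
    also have "\<dots> = (\<Sum>j\<in>UNIV. (v \<bullet> av j) *\<^sub>R f (alpha j))"
      by (simp add: sigma_def f_alpha)
    also have "\<dots> = f v"
      by (subst (2) expand[of v]) (simp add: linear_sum[OF f_lin] linear_scale[OF f_lin])
    finally show ?thesis .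
  qed
  hence sfeq: "sigma = f" by auto
  have ff: "f (f v) = v" for v
    unfolding f_def using wa by (simp add: inner_add_right algebra_simps)
  have ak0: "alpha k \<noteq> 0" using alpha_dual[of k k] by auto
  have "is_reflection f"
    unfolding is_reflection_def
  proof (intro conjI)
    show "linear f" by (rule f_lin)
    show "bij f" by (metis bij_betw_byWitness ff subset_UNIV surjI)
    show "f \<noteq> id"
    proof
      assume "f = id"
      then have "f (alpha k) = alpha k" by simp
      then have "(-2) *\<^sub>R alpha k = 0" unfolding f_def using wa by simp
      then show False using ak0 by simp
    qed
    show "\<exists>m>0. f ^^ m = id"
      by (rule exI[of _ 2]) (auto simp: fun_eq_iff ff numeral_2_eq_2)
    show "\<exists>H. lin_hyperplane H \<and> (\<forall>x\<in>H. f x = x)"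
    proof (intro exI conjI)
      show "lin_hyperplane {x. w \<bullet> x = 0}"
        unfolding lin_hyperplane_def using wa by (intro exI[of _ w]) auto
      show "\<forall>x\<in>{x. w \<bullet> x = 0}. f x = x" by (simp add: f_def)
    qed
  qed
  with part2 sfeq show ?thesis by simp
qed

end
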